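(* Let $\Gamma=\langle V,(w_u)_{u\in V},\alpha,\beta\rangle$ be a celebrity game with $\beta>1$, $n=|V|$, $W=\sum_{u\in V}w_u$ and $w_{\max}=\max_u w_u$. The following are equivalent: (1) $\Gamma$ is a star celebrity game; (2) either $\alpha<w_{\max}$, or $\alpha\ge w_{\max}$ and there is at most one $u\in V$ with $\alpha>W-w_u$; (3) a star graph $S_n$ on $V$ (a tree with one vertex adjacent to all others) is a Nash equilibrium graph of $\Gamma$.
   Context: A celebrity game $\Gamma=\langle V,(w_u)_{u\in V},\alpha,\beta\rangle$ consists of a set of players $V=\{1,\dots,n\}$, celebrity weights $w_u>0$, a link cost $\alpha>0$ and a critical distance $\beta$ with $1\le\beta\le n-1$. A strategy of player $u$ is a set $S_u\subseteq V\setminus\{u\}$; a strategy profile is $S=(S_1,\dots,S_n)$; its outcome graph $G[S]$ is the undirected graph on $V$ with edge set $\{\{u,v\}: u\in S_v\text{ or }v\in S_u\}$. With $d_G$ the graph distance (infinite between different connected components), the cost of player $u$ is $c_u(S)=\alpha|S_u|+\sum_{v:\,d_{G[S]}(u,v)>\beta}w_v$. $S$ is a Nash equilibrium if no player can strictly decrease its cost by changing only its own strategy; a graph $G$ is a Nash equilibrium graph of $\Gamma$ if $G=G[S]$ for some Nash equilibrium $S$. $\Gamma$ is a star celebrity game if it has a Nash equilibrium graph that is connected. *)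

theory Defs
  imports Complex_Main
begin

definition players :: "nat \<Rightarrow> nat set" where
  "players n = {1..n}"

definition strategy_profile :: "nat \<Rightarrow> (nat \<Rightarrow> nat set) \<Rightarrow> bool" where
  "strategy_profile n S \<longleftrightarrow> (\<forall>u\<in>players n. S u \<subseteq> players n - {u})"

definition outcome_graph :: "nat \<Rightarrow> (nat \<Rightarrow> nat set) \<Rightarrow> nat \<Rightarrow> nat \<Rightarrow> bool" where
  "outcome_graph n S u v \<longleftrightarrow>
     u \<in> players n \<and> v \<in> players n \<and> (u \<in> S v \<or> v \<in> S u)"

fun within_dist :: "(nat \<Rightarrow> nat \<Rightarrow> bool) \<Rightarrow> nat \<Rightarrow> nat \<Rightarrow> nat \<Rightarrow> bool" where
  "within_dist G 0 u v \<longleftrightarrow> u = v"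
| "within_dist G (Suc k) u v \<longleftrightarrow> within_dist G k u v \<or> (\<exists>x. within_dist G k u x \<and> G x v)"

definition player_cost ::
  "nat \<Rightarrow> (nat \<Rightarrow> real) \<Rightarrow> real \<Rightarrow> nat \<Rightarrow> (nat \<Rightarrow> nat set) \<Rightarrow> nat \<Rightarrow> real" where
  "player_cost n w \<alpha> \<beta> S u =
     \<alpha> * real (card (S u)) +
     (\<Sum>v\<in>{v \<in> players n. \<not> within_dist (outcome_graph n S) \<beta> u v}. w v)"

definition nash_equilibrium ::
  "nat \<Rightarrow> (nat \<Rightarrow> real) \<Rightarrow> real \<Rightarrow> nat \<Rightarrow> (nat \<Rightarrow> nat set) \<Rightarrow> bool" where
  "nash_equilibrium n w \<alpha> \<beta> S \<longleftrightarrow>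
     strategy_profile n S \<and>
     (\<forall>u\<in>players n. \<forall>S'. S' \<subseteq> players n - {u} \<longrightarrow>
        player_cost n w \<alpha> \<beta> S u \<le> player_cost n w \<alpha> \<beta> (S(u := S')) u)"

definition ne_graph ::
  "nat \<Rightarrow> (nat \<Rightarrow> real) \<Rightarrow> real \<Rightarrow> nat \<Rightarrow> (nat \<Rightarrow> nat \<Rightarrow> bool) \<Rightarrow> bool" where
  "ne_graph n w \<alpha> \<beta> G \<longleftrightarrow> (\<exists>S. nash_equilibrium n w \<alpha> \<beta> S \<and> G = outcome_graph n S)"

definition connected_graph :: "nat \<Rightarrow> (nat \<Rightarrow> nat \<Rightarrow> bool) \<Rightarrow> bool" where
  "connected_graph n G \<longleftrightarrow> (\<forall>u\<in>players n. \<forall>v\<in>players n. G\<^sup>*\<^sup>* u v)"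

definition star_celebrity_game :: "nat \<Rightarrow> (nat \<Rightarrow> real) \<Rightarrow> real \<Rightarrow> nat \<Rightarrow> bool" where
  "star_celebrity_game n w \<alpha> \<beta> \<longleftrightarrow> (\<exists>G. ne_graph n w \<alpha> \<beta> G \<and> connected_graph n G)"

definition star_graph :: "nat \<Rightarrow> nat \<Rightarrow> nat \<Rightarrow> nat \<Rightarrow> bool" where
  "star_graph n c u v \<longleftrightarrow>
     u \<in> players n \<and> v \<in> players n \<and> u \<noteq> v \<and> (u = c \<or> v = c)"

end

theory Submission
  imports Defs
begin

lemma fin_players[simp]: "finite (players n)"
  by (simp add: players_def)

lemma wd_refl: "within_dist G k u u"
  by (induction k) auto

lemma wd_mono: "within_dist G k u v \<Longrightarrow> k \<le> k' \<Longrightarrow> within_dist G k' u v"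
proof (induction k' )
  case 0 then show ?case by simp
next
  case (Suc k') then show ?case by (cases "k = Suc k'") auto
qed

lemma wd_isolated: "(\<forall>y. \<not> G u y) \<Longrightarrow> within_dist G k u v \<Longrightarrow> v = u"
  by (induction k arbitrary: v) auto

lemma wd_star2:
  assumes "u \<in> players n" "v \<in> players n" "c \<in> players n"
  shows "within_dist (star_graph n c) 2 u v"
proof -
  have e: "within_dist (star_graph n c) 2 u v = (within_dist (star_graph n c) 1 u v \<or>
     (\<exists>x. within_dist (star_graph n c) 1 u x \<and> star_graph n c x v))"
    by (simp add: numeral_2_eq_2)
  have e1: "\<And>x. within_dist (star_graph n c) 1 u x = (u = x \<or> star_graph n c u x)"
    by simp
  show ?thesis
  proof (cases "u = v")
    case True then show ?thesis by (simp add: wd_refl)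
  next
    case False
    show ?thesis
    proof (cases "u = c \<or> v = c")
      case True
      then show ?thesis using False assms unfolding e e1 star_graph_def by auto
    next
      case F2: False
      have "within_dist (star_graph n c) 1 u c" unfolding e1 star_graph_def using assms F2 by auto
      moreover have "star_graph n c c v" unfolding star_graph_def using assms F2 by auto
      ultimately show ?thesis unfolding e by blast
    qed
  qed
qed

lemma sum_rem:
  assumes "u \<in> players n"
  shows "(\<Sum>v\<in>players n - {u}. w v) = (\<Sum>v\<in>players n. w v) - (w u :: real)"
  using assms by (simp add: sum_diff1)

lemma star_ne:
  assumes c: "c \<in> players n"
    and good: "\<forall>v\<in>players n. v \<noteq> c \<longrightarrow> \<alpha> \<le> (\<Sum>v\<in>players n. w v) - w v"
    and w_pos: "\<forall>u\<in>players n. w u > 0"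
    and alpha_pos: "\<alpha> > 0"
    and beta: "2 \<le> \<beta>"
  shows "ne_graph n w \<alpha> \<beta> (star_graph n c)"
proof -
  define S0 where "S0 = (\<lambda>v. if v \<in> players n \<and> v \<noteq> c then {c} else ({}::nat set))"
  have sp: "strategy_profile n S0" unfolding strategy_profile_def S0_def using c by auto
  have og: "outcome_graph n S0 = star_graph n c"
    by (rule ext, rule ext) (auto simp: outcome_graph_def star_graph_def S0_def)
  have reach: "\<And>u v. u \<in> players n \<Longrightarrow> v \<in> players n \<Longrightarrow> within_dist (outcome_graph n S0) \<beta> u v"
    unfolding og using wd_star2 wd_mono beta c by blast
  have cost0: "player_cost n w \<alpha> \<beta> S0 u = \<alpha> * real (card (S0 u))" if "u \<in> players n" for u
  proof -
    have E: "{v \<in> players n. \<not> within_dist (outcome_graph n S0) \<beta> u v} = {}"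
      using reach that by auto
    show ?thesis unfolding player_cost_def E by simp
  qed
  have nonneg: "0 \<le> (\<Sum>v\<in>A. w v)" if "A \<subseteq> players n" for A
    using w_pos that by (intro sum_nonneg) (auto simp: less_imp_le)
  have dev: "player_cost n w \<alpha> \<beta> S0 u \<le> player_cost n w \<alpha> \<beta> (S0(u := S')) u"
    if u: "u \<in> players n" and S': "S' \<subseteq> players n - {u}" for u S'
  proof -
    define U where "U = {v \<in> players n. \<not> within_dist (outcome_graph n (S0(u := S'))) \<beta> u v}"
    have pc: "player_cost n w \<alpha> \<beta> (S0(u := S')) u = \<alpha> * real (card S') + (\<Sum>v\<in>U. w v)"
      unfolding player_cost_def U_def by simp
    have U0: "0 \<le> (\<Sum>v\<in>U. w v)" using nonneg[of U] unfolding U_def by auto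
    show ?thesis
    proof (cases "u = c")
      case True
      then show ?thesis using cost0[OF u] pc U0 alpha_pos by (simp add: S0_def)
    next
      case uc: False
      have l: "player_cost n w \<alpha> \<beta> S0 u = \<alpha>" using cost0[OF u] uc u by (simp add: S0_def)
      show ?thesis
      proof (cases "S' = {}")
        case False
        have "finite S'" using S' finite_subset by (metis Diff_subset fin_players order_trans)
        then have "card S' \<ge> 1" using False by (simp add: Suc_leI card_gt_0_iff)
        then have "\<alpha> * 1 \<le> \<alpha> * real (card S')" using alpha_pos by (intro mult_left_mono) auto
        then show ?thesis using l pc U0 by simp
      next
        case True
        have iso: "\<forall>y. \<not> outcome_graph n (S0(u := S')) u y"
          using True uc by (auto simp: outcome_graph_def S0_def)
        have "U = players n - {u}"
          unfolding U_def using wd_isolated[where G="outcome_graph n (S0(u := S'))" and u=u, OF iso] wd_refl by blast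
        then have "(\<Sum>v\<in>U. w v) = (\<Sum>v\<in>players n. w v) - w u" using sum_rem[OF u] by simp
        then show ?thesis using l pc True good u uc by simp
      qed
    qed
  qed
  have "nash_equilibrium n w \<alpha> \<beta> S0" unfolding nash_equilibrium_def using sp dev by blast
  then show ?thesis unfolding ne_graph_def using og by metis
qed

lemma ne_card_bound:
  assumes ne: "nash_equilibrium n w \<alpha> \<beta> S" and x: "x \<in> players n"
    and w_pos: "\<forall>u\<in>players n. w u > 0"
  shows "\<alpha> * real (card (S x)) \<le> (\<Sum>v\<in>players n. w v) - w x"
proof -
  have "player_cost n w \<alpha> \<beta> S x \<le> player_cost n w \<alpha> \<beta> (S(x := {})) x"
    using ne x unfolding nash_equilibrium_def by auto
  moreover have "\<alpha> * real (card (S x)) \<le> player_cost n w \<alpha> \<beta> S x"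
    unfolding player_cost_def using w_pos by (auto intro!: sum_nonneg simp: less_imp_le)
  moreover have "player_cost n w \<alpha> \<beta> (S(x := {})) x \<le> (\<Sum>v\<in>players n - {x}. w v)"
  proof -
    have "player_cost n w \<alpha> \<beta> (S(x := {})) x =
       (\<Sum>v\<in>{v \<in> players n. \<not> within_dist (outcome_graph n (S(x := {}))) \<beta> x v}. w v)"
      unfolding player_cost_def by simp
    also have "\<dots> \<le> (\<Sum>v\<in>players n - {x}. w v)"
      using w_pos wd_refl by (intro sum_mono2) (auto simp: less_imp_le)
    finally show ?thesis .
  qed
  ultimately show ?thesis using sum_rem[OF x, of w] by linarith
qed

lemma funpow_fix: "f x = x \<Longrightarrow> (f ^^ k) x = x"
  by (induction k) auto

lemma no_conn:
  assumes ne: "nash_equilibrium n w \<alpha> \<beta> S"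
    and u1: "u1 \<in> players n" and u2: "u2 \<in> players n" and neq: "u1 \<noteq> u2"
    and b1: "(\<Sum>v\<in>players n. w v) - w u1 < \<alpha>"
    and b2: "(\<Sum>v\<in>players n. w v) - w u2 < \<alpha>"
    and amax: "\<forall>u\<in>players n. w u \<le> \<alpha>"
    and w_pos: "\<forall>u\<in>players n. w u > 0"
    and alpha_pos: "\<alpha> > 0"
  shows "\<not> connected_graph n (outcome_graph n S)"
proof
  assume conn: "connected_graph n (outcome_graph n S)"
  have sp: "\<And>x. x \<in> players n \<Longrightarrow> S x \<subseteq> players n - {x}"
    using ne unfolding nash_equilibrium_def strategy_profile_def by auto
  have finS: "\<And>x. x \<in> players n \<Longrightarrow> finite (S x)"
    using sp by (meson Diff_subset fin_players finite_subset order_trans)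
  have e1: "S u1 = {}"
  proof -
    have "\<alpha> * real (card (S u1)) < \<alpha> * 1" using ne_card_bound[OF ne u1 w_pos] b1 by simp
    then have "card (S u1) = 0" using alpha_pos by (simp add: mult_less_cancel_left_pos)
    then show ?thesis using finS[OF u1] by simp
  qed
  have e2: "S u2 = {}"
  proof -
    have "\<alpha> * real (card (S u2)) < \<alpha> * 1" using ne_card_bound[OF ne u2 w_pos] b2 by simp
    then have "card (S u2) = 0" using alpha_pos by (simp add: mult_less_cancel_left_pos)
    then show ?thesis using finS[OF u2] by simp
  qed
  have c1: "card (S x) \<le> 1" if x: "x \<in> players n" for x
  proof -
    have "(\<Sum>v\<in>players n. w v) - w x < \<alpha> * 2"
    proof (cases "x = u1")
      case True then show ?thesis using b1 alpha_pos by simp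
    next
      case False
      then show ?thesis using b1 amax u1 w_pos x by force
    qed
    then have "\<alpha> * real (card (S x)) < \<alpha> * 2" using ne_card_bound[OF ne x w_pos] by simp
    then have "real (card (S x)) < 2" using alpha_pos by (simp add: mult_less_cancel_left_pos)
    then show ?thesis by linarith
  qed
  define f where "f = (\<lambda>x. if S x = {} then x else (SOME y. y \<in> S x))"
  have fx: "f x = y" if x: "x \<in> players n" and y: "y \<in> S x" for x y
  proof -
    have "S x \<noteq> {}" using y by auto
    then have "f x = (SOME y. y \<in> S x)" by (simp add: f_def)
    moreover have "(SOME y. y \<in> S x) \<in> S x" using y by (rule someI)
    ultimately show ?thesis using c1[OF x] finS[OF x] y by (metis card_le_Suc0_iff_eq One_nat_def)
  qed
  define R where "R = (\<lambda>x. {s. S s = {} \<and> (\<exists>k. (f ^^ k) x = s)})"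
  have Redge: "R x = R y" if x: "x \<in> players n" and y: "y \<in> S x" for x y
  proof -
    have ne0: "S x \<noteq> {}" using y by auto
    have fxy: "f x = y" by (rule fx[OF x y])
    show ?thesis
    proof (rule set_eqI, rule iffI)
      fix s assume "s \<in> R x"
      then obtain k where s: "S s = {}" "(f ^^ k) x = s" unfolding R_def by auto
      then obtain k' where "k = Suc k'" using ne0 by (cases k) auto
      then have "(f ^^ k') y = s" using s fxy by (simp add: funpow_Suc_right del: funpow.simps)
      then show "s \<in> R y" using s unfolding R_def by auto
    next
      fix s assume "s \<in> R y"
      then obtain k where s: "S s = {}" "(f ^^ k) y = s" unfolding R_def by auto
      then have "(f ^^ Suc k) x = s" using fxy by (simp add: funpow_Suc_right del: funpow.simps)
      then show "s \<in> R x" using s unfolding R_def by blast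
    qed
  qed
  have Rpath: "(outcome_graph n S)\<^sup>*\<^sup>* a b \<Longrightarrow> R a = R b" for a b
  proof (induction rule: rtranclp_induct)
    case base then show ?case by simp
  next
    case (step b c)
    from step(2) have "R b = R c" unfolding outcome_graph_def using Redge by metis
    then show ?case using step(3) by simp
  qed
  have Rsink: "R u = {u}" if "S u = {}" for u
  proof -
    have "f u = u" using that by (simp add: f_def)
    then have "\<And>k. (f ^^ k) u = u" by (rule funpow_fix)
    then show ?thesis using that unfolding R_def by auto
  qed
  have "(outcome_graph n S)\<^sup>*\<^sup>* u1 u2" using conn u1 u2 unfolding connected_graph_def by blast
  then have "R u1 = R u2" by (rule Rpath)
  then show False using Rsink[OF e1] Rsink[OF e2] neq by simp
qed

lemma star_conn:
  assumes c: "c \<in> players n"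
  shows "connected_graph n (star_graph n c)"
  unfolding connected_graph_def
proof (intro ballI)
  fix u v assume u: "u \<in> players n" and v: "v \<in> players n"
  have a: "(star_graph n c)\<^sup>*\<^sup>* u c"
    by (cases "u = c") (auto simp: star_graph_def u c intro!: r_into_rtranclp)
  have b: "(star_graph n c)\<^sup>*\<^sup>* c v"
    by (cases "v = c") (auto simp: star_graph_def v c intro!: r_into_rtranclp)
  show "(star_graph n c)\<^sup>*\<^sup>* u v" using a b by simp
qed

theorem corollary2:
  fixes n :: nat and w :: "nat \<Rightarrow> real" and \<alpha> :: real and \<beta> :: nat
  assumes w_pos: "\<forall>u\<in>players n. w u > 0"
    and alpha_pos: "\<alpha> > 0"
    and beta_ge: "1 \<le> \<beta>" and beta_le: "\<beta> \<le> n - 1"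
    and beta_gt: "\<beta> > 1"
  shows "(star_celebrity_game n w \<alpha> \<beta> \<longleftrightarrow>
          (\<alpha> < Max (w ` players n) \<or>
           (\<alpha> \<ge> Max (w ` players n) \<and>
            card {u \<in> players n. \<alpha> > (\<Sum>v\<in>players n. w v) - w u} \<le> 1)))
       \<and> (star_celebrity_game n w \<alpha> \<beta> \<longleftrightarrow>
          (\<exists>c\<in>players n. ne_graph n w \<alpha> \<beta> (star_graph n c)))"
proof -
  let ?W = "\<Sum>v\<in>players n. w v"
  let ?M = "Max (w ` players n)"
  let ?B = "{u \<in> players n. \<alpha> > ?W - w u}"
  have one: "1 \<in> players n" using beta_gt beta_le by (simp add: players_def)
  have ne: "players n \<noteq> {}" using one by auto
  have maxge: "\<And>u. u \<in> players n \<Longrightarrow> w u \<le> ?M" by simp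
  have P1: "star_celebrity_game n w \<alpha> \<beta> \<Longrightarrow> (\<alpha> < ?M \<or> (\<alpha> \<ge> ?M \<and> card ?B \<le> 1))"
  proof (rule ccontr)
    assume sc: "star_celebrity_game n w \<alpha> \<beta>" and nc: "\<not> (\<alpha> < ?M \<or> (\<alpha> \<ge> ?M \<and> card ?B \<le> 1))"
    then have am: "\<alpha> \<ge> ?M" and cb: "\<not> card ?B \<le> 1" by auto
    have "finite ?B" by simp
    then obtain u1 u2 where "u1 \<in> ?B" "u2 \<in> ?B" "u1 \<noteq> u2" using cb card_le_Suc0_iff_eq
      by (metis (no_types, lifting) One_nat_def)
    then have u: "u1 \<in> players n" "u2 \<in> players n" "?W - w u1 < \<alpha>" "?W - w u2 < \<alpha>" "u1 \<noteq> u2"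
      by auto
    from sc obtain G S where "nash_equilibrium n w \<alpha> \<beta> S" "G = outcome_graph n S" "connected_graph n G"
      unfolding star_celebrity_game_def ne_graph_def by blast
    moreover have "\<forall>u\<in>players n. w u \<le> \<alpha>" using maxge am order_trans by blast
    ultimately show False using no_conn[of n w \<alpha> \<beta> S u1 u2] u w_pos alpha_pos by blast
  qed
  have P2: "(\<alpha> < ?M \<or> (\<alpha> \<ge> ?M \<and> card ?B \<le> 1)) \<Longrightarrow> (\<exists>c\<in>players n. ne_graph n w \<alpha> \<beta> (star_graph n c))"
  proof -
    assume h: "\<alpha> < ?M \<or> (\<alpha> \<ge> ?M \<and> card ?B \<le> 1)"
    have "\<exists>c\<in>players n. \<forall>v\<in>players n. v \<noteq> c \<longrightarrow> \<alpha> \<le> ?W - w v"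
    proof (cases "\<alpha> < ?M")
      case True
      obtain m where m: "m \<in> players n" "w m = ?M" using Max_in[of "w ` players n"] ne by fastforce
      have "\<alpha> \<le> ?W - w v" if v: "v \<in> players n" "v \<noteq> m" for v
      proof -
        have "w m \<le> (\<Sum>v\<in>players n - {v}. w v)"
          using m v w_pos by (intro member_le_sum) (auto simp: less_imp_le)
        then show ?thesis using sum_rem[OF v(1), of w] m True by linarith
      qed
      then show ?thesis using m by blast
    next
      case False
      then have cb: "card ?B \<le> 1" using h by auto
      show ?thesis
      proof (cases "?B = {}")
        case True
        have "\<forall>v\<in>players n. v \<noteq> 1 \<longrightarrow> \<alpha> \<le> ?W - w v"
        proof (intro ballI impI)
          fix v assume "v \<in> players n"
          then have "v \<notin> ?B" using True by blast
          then show "\<alpha> \<le> ?W - w v" using \<open>v \<in> players n\<close> by auto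
        qed
        then show ?thesis using one by blast
      next
        case False
        then obtain b where b: "b \<in> ?B" by blast
        have "\<forall>v\<in>players n. v \<noteq> b \<longrightarrow> \<alpha> \<le> ?W - w v"
        proof (intro ballI impI)
          fix v assume "v \<in> players n" "v \<noteq> b"
          then have "v \<notin> ?B" using b cb card_le_Suc0_iff_eq[of ?B] by auto
          then show "\<alpha> \<le> ?W - w v" using \<open>v \<in> players n\<close> by auto
        qed
        then show ?thesis using b by blast
      qed
    qed
    then obtain c where "c \<in> players n" "\<forall>v\<in>players n. v \<noteq> c \<longrightarrow> \<alpha> \<le> ?W - w v" by blast
    then show ?thesis using star_ne[of c n \<alpha> w \<beta>] w_pos alpha_pos beta_gt by auto
  qed
  have P3: "(\<exists>c\<in>players n. ne_graph n w \<alpha> \<beta> (star_graph n c)) \<Longrightarrow> star_celebrity_game n w \<alpha> \<beta>"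
    unfolding star_celebrity_game_def using star_conn by blast
  show ?thesis using P1 P2 P3 by blast
qed

end
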